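(* Let $(X,\mathcal{A})$ be a resolvable design with $v$ points, $b$ blocks of size $k$, $r$ parallel classes and $b_r=b/r$ blocks per parallel class. Consider the coded caching system with $N$ files, $b$ caches each of size $M=Nk/v$ files, and $K=b$ users each having access to exactly one cache (user $j$ to the cache of block $A_j$), with the placement and delivery described in the context. If $N\geq K$ and the demands are distinct, the scheme achieves the worst-case rate $R=\frac{rk\binom{b_r}{2}}{v}$, and the number of users benefited in each transmission (the gain) is $2$.
   Context: A resolvable design $(X,\mathcal{A})$: $X$ a finite set of $v$ points, $\mathcal{A}$ a collection of $b$ blocks each of size $k$, partitioned into $r$ parallel classes, each being a set of $b_r=v/k$ pairwise disjoint blocks with union $X$. Placement: each file $W_i$ ($i\in[N]$, unit size) is split into $v$ equal subfiles $W_{i,x}$, $x\in X$; the cache of block $A_j$ stores $W_{i,x}$ for all $x\in A_j$ and all $i$. Delivery: user $m$ demands $W_{d_m}$. For each parallel class and each pair of distinct blocks $C_{i},C_{j}$ in it, let the users of these two caches be $m$ (cache $C_i$) and $m'$ (cache $C_j$); set $f_m=C_j=\{y_{m,1},\dots,y_{m,k}\}$ and $f_{m'}=C_i=\{y_{m',1},\dots,y_{m',k}\}$ (fixed orderings), and transmit $W_{d_m,y_{m,s}}\oplus W_{d_{m'},y_{m',s}}$ for each $s\in[k]$, each of size $1/v$ file. The rate is the total amount transmitted in units of files; a user is benefited by a transmission if it obtains a subfile of its demanded file from it. *)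

theory Defs
  imports Complex_Main
begin

definition resolvable_design ::
  "'p set \<Rightarrow> (nat \<Rightarrow> 'p set) \<Rightarrow> nat \<Rightarrow> nat \<Rightarrow> nat \<Rightarrow> nat \<Rightarrow> (nat \<Rightarrow> nat) \<Rightarrow> bool" where
  "resolvable_design X A b k r br cls \<longleftrightarrow>
     finite X \<and>
     (\<forall>j<b. A j \<subseteq> X \<and> card (A j) = k) \<and>
     (\<forall>j<b. cls j < r) \<and>
     (\<forall>c<r. (\<Union>j\<in>{j. j < b \<and> cls j = c}. A j) = X
          \<and> (\<forall>i<b. \<forall>j<b. i \<noteq> j \<and> cls i = c \<and> cls j = c \<longrightarrow> A i \<inter> A j = {})
          \<and> card {j. j < b \<and> cls j = c} = br)"

text \<open>Subfile W_{i,x} is labelled (i, x). A transmission is the XOR of two subfiles,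
  represented by the pair of their labels.\<close>
type_synonym 'p subfile = "nat \<times> 'p"
type_synonym 'p transmission = "'p subfile \<times> 'p subfile"

definition trans_idx :: "nat \<Rightarrow> (nat \<Rightarrow> nat) \<Rightarrow> nat \<Rightarrow> (nat \<times> nat \<times> nat) set" where
  "trans_idx b cls k = {(i, j, s). i < j \<and> j < b \<and> cls i = cls j \<and> s < k}"

text \<open>User i (cache A i) and user j (cache A j); f_i = A j, f_j = A i with fixed orderings
  ord j s, ord i s. Transmit W_{d i, ord j s} XOR W_{d j, ord i s}.\<close>
definition transmission ::
  "(nat \<Rightarrow> nat) \<Rightarrow> (nat \<Rightarrow> nat \<Rightarrow> 'p) \<Rightarrow> nat \<times> nat \<times> nat \<Rightarrow> 'p transmission" where
  "transmission d ord t = (case t of (i, j, s) \<Rightarrow> ((d i, ord j s), (d j, ord i s)))"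

text \<open>Rate: total amount transmitted (each transmission has size 1/v file), in files.\<close>
definition delivery_rate :: "'p set \<Rightarrow> nat \<Rightarrow> (nat \<Rightarrow> nat) \<Rightarrow> nat \<Rightarrow> real" where
  "delivery_rate X b cls k = (\<Sum>t\<in>trans_idx b cls k. 1 / real (card X))"

definition distinct_demands :: "nat \<Rightarrow> nat \<Rightarrow> (nat \<Rightarrow> nat) set" where
  "distinct_demands N b = {d. (\<forall>u<b. d u < N) \<and> inj_on d {..<b}}"

text \<open>Worst-case rate over all distinct demand vectors (the number and sizes of the scheme's
  transmissions do not depend on the demand vector).\<close>
definition worst_case_rate :: "'p set \<Rightarrow> nat \<Rightarrow> nat \<Rightarrow> (nat \<Rightarrow> nat) \<Rightarrow> nat \<Rightarrow> real" where
  "worst_case_rate X N b cls k =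
     (SUP d\<in>distinct_demands N b. delivery_rate X b cls k)"

text \<open>User u (cache A u, demand d u) obtains a subfile of its demanded file from transmission
  (e1, e2): one summand is a subfile of W_{d u} not in its cache, and the other summand is in
  its cache (the cache of A u stores W_{i,x} for all files i and x in A u).\<close>
definition benefits :: "(nat \<Rightarrow> 'p set) \<Rightarrow> (nat \<Rightarrow> nat) \<Rightarrow> nat \<Rightarrow> 'p transmission \<Rightarrow> bool" where
  "benefits A d u tr \<longleftrightarrow>
     (case tr of (e1, e2) \<Rightarrow>
        (fst e1 = d u \<and> snd e1 \<notin> A u \<and> snd e2 \<in> A u) \<or>
        (fst e2 = d u \<and> snd e2 \<notin> A u \<and> snd e1 \<in> A u))"

end

theory Submission
  imports Defs
begin

lemma pairs_card:
  fixes C :: "nat set"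
  assumes "finite C"
  shows "card {(i,j). i < j \<and> i \<in> C \<and> j \<in> C} = card C choose 2"
proof -
  have "bij_betw (\<lambda>(i,j). {i,j}) {(i,j). i < j \<and> i \<in> C \<and> j \<in> C} {S. S \<subseteq> C \<and> card S = 2}"
  proof (rule bij_betwI')
    fix x y assume "x \<in> {(i,j). i < j \<and> i \<in> C \<and> j \<in> C}" "y \<in> {(i,j). i < j \<and> i \<in> C \<and> j \<in> C}"
    then show "((case x of (i, j) \<Rightarrow> {i, j}) = (case y of (i, j) \<Rightarrow> {i, j})) = (x = y)"
      by (cases x; cases y) (auto simp: doubleton_eq_iff)
  next
    fix x assume "x \<in> {(i,j). i < j \<and> i \<in> C \<and> j \<in> C}"
    then show "(case x of (i, j) \<Rightarrow> {i, j}) \<in> {S. S \<subseteq> C \<and> card S = 2}" by auto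
  next
    fix S assume "S \<in> {S. S \<subseteq> C \<and> card S = 2}"
    then obtain x y where S: "S = {x,y}" "x \<noteq> y" "S \<subseteq> C" by (auto simp: card_2_iff)
    show "\<exists>p\<in>{(i,j). i < j \<and> i \<in> C \<and> j \<in> C}. S = (case p of (i, j) \<Rightarrow> {i, j})"
    proof (cases "x < y")
      case True thus ?thesis using S by (intro bexI[of _ "(x,y)"]) auto
    next
      case False thus ?thesis using S by (intro bexI[of _ "(y,x)"]) auto
    qed
  qed
  then have "card {(i,j). i < j \<and> i \<in> C \<and> j \<in> C} = card {S. S \<subseteq> C \<and> card S = 2}"
    by (rule bij_betw_same_card)
  also have "\<dots> = card C choose 2" using n_subsets[OF assms] by simp
  finally show ?thesis .
qed

theorem theorem2:
  fixes X :: "'p set" and A :: "nat \<Rightarrow> 'p set" and b k r br N :: nat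
    and cls :: "nat \<Rightarrow> nat" and ord :: "nat \<Rightarrow> nat \<Rightarrow> 'p" and d :: "nat \<Rightarrow> nat"
  assumes design: "resolvable_design X A b k r br cls"
    and ord: "\<forall>j<b. bij_betw (ord j) {..<k} (A j)"
    and NK: "N \<ge> b"
    and dem: "d \<in> distinct_demands N b"
  shows "delivery_rate X b cls k = real (r * k * (br choose 2)) / real (card X)
    \<and> worst_case_rate X N b cls k = real (r * k * (br choose 2)) / real (card X)
    \<and> (\<forall>u<b. \<forall>x\<in>X - A u. \<exists>t\<in>trans_idx b cls k.
          (case transmission d ord t of (e1, e2) \<Rightarrow>
             (e1 = (d u, x) \<and> snd e2 \<in> A u) \<or> (e2 = (d u, x) \<and> snd e1 \<in> A u)))
    \<and> (\<forall>t\<in>trans_idx b cls k. card {u. u < b \<and> benefits A d u (transmission d ord t)} = 2)"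
proof -
  note D = design[unfolded resolvable_design_def]
  have inj: "inj_on d {..<b}" using dem by (simp add: distinct_demands_def)
  define P where "P = {(i,j). i < j \<and> j < b \<and> cls i = cls j}"
  define Pc where "Pc c = {(i,j). i < j \<and> i \<in> {j. j < b \<and> cls j = c} \<and> j \<in> {j. j < b \<and> cls j = c}}" for c
  have PU: "P = (\<Union>c\<in>{..<r}. Pc c)" using D by (auto simp: P_def Pc_def)
  have cPc: "card (Pc c) = br choose 2" if "c < r" for c
    unfolding Pc_def using pairs_card[of "{j. j < b \<and> cls j = c}"] D that by simp
  have cP: "card P = r * (br choose 2)"
  proof -
    have fin: "finite (Pc c)" for c
    proof -
      have "Pc c \<subseteq> {..<b} \<times> {..<b}" by (auto simp: Pc_def)
      thus ?thesis by (rule finite_subset) simp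
    qed
    have "card P = (\<Sum>c\<in>{..<r}. card (Pc c))" unfolding PU
      apply (rule card_UN_disjoint)
        apply simp
       apply (simp add: fin)
      apply (auto simp: Pc_def)
      done
    also have "\<dots> = r * (br choose 2)" using cPc by simp
    finally show ?thesis .
  qed
  have "bij_betw (\<lambda>((i,j),s). (i,j,s)) (P \<times> {..<k}) (trans_idx b cls k)"
    by (rule bij_betwI') (auto simp: P_def trans_idx_def)
  then have "card (trans_idx b cls k) = card (P \<times> {..<k})"
    by (metis bij_betw_same_card)
  then have cT: "card (trans_idx b cls k) = r * k * (br choose 2)"
    using cP by (simp add: card_cartesian_product)
  have R: "delivery_rate X b cls k = real (r * k * (br choose 2)) / real (card X)"
    unfolding delivery_rate_def using cT by simp
  have W: "worst_case_rate X N b cls k = real (r * k * (br choose 2)) / real (card X)"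
  proof -
    have "distinct_demands N b \<noteq> {}" using dem by auto
    then show ?thesis unfolding worst_case_rate_def using R by (simp add: cSUP_const)
  qed
  have C3: "\<forall>u<b. \<forall>x\<in>X - A u. \<exists>t\<in>trans_idx b cls k.
          (case transmission d ord t of (e1, e2) \<Rightarrow>
             (e1 = (d u, x) \<and> snd e2 \<in> A u) \<or> (e2 = (d u, x) \<and> snd e1 \<in> A u))"
  proof (intro allI impI ballI)
    fix u x assume u: "u < b" and x: "x \<in> X - A u"
    have "cls u < r" using D u by auto
    then have "x \<in> (\<Union>j\<in>{j. j < b \<and> cls j = cls u}. A j)" using D x by auto
    then obtain j where j: "j < b" "cls j = cls u" "x \<in> A j" by auto
    have ju: "j \<noteq> u" using j x by auto
    obtain s where s: "s < k" "ord j s = x" using ord j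
      by (metis bij_betw_iff_bijections lessThan_iff)
    have ous: "ord u s \<in> A u" using ord u s(1) by (meson bij_betwE lessThan_iff)
    show "\<exists>t\<in>trans_idx b cls k.
          (case transmission d ord t of (e1, e2) \<Rightarrow>
             (e1 = (d u, x) \<and> snd e2 \<in> A u) \<or> (e2 = (d u, x) \<and> snd e1 \<in> A u))"
    proof (cases "u < j")
      case True thus ?thesis using j s ous u
        by (intro bexI[of _ "(u,j,s)"]) (auto simp: trans_idx_def transmission_def)
    next
      case False then have "j < u" using ju by simp
      thus ?thesis using j s ous u
        by (intro bexI[of _ "(j,u,s)"]) (auto simp: trans_idx_def transmission_def)
    qed
  qed
  have C4: "\<forall>t\<in>trans_idx b cls k. card {u. u < b \<and> benefits A d u (transmission d ord t)} = 2"
  proof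
    fix t assume "t \<in> trans_idx b cls k"
    then obtain i j s where t: "t = (i,j,s)" "i < j" "j < b" "cls i = cls j" "s < k"
      by (auto simp: trans_idx_def)
    have ib: "i < b" using t by simp
    have cl: "cls i < r" using D ib by auto
    have disj: "A i \<inter> A j = {}" using D t ib cl by blast
    have ois: "ord i s \<in> A i" using ord ib t(5) by (meson bij_betwE lessThan_iff)
    have ojs: "ord j s \<in> A j" using ord t(3) t(5) by (meson bij_betwE lessThan_iff)
    have "{u. u < b \<and> benefits A d u (transmission d ord t)} = {i,j}"
    proof (rule set_eqI, rule iffI)
      fix u assume "u \<in> {u. u < b \<and> benefits A d u (transmission d ord t)}"
      then have u: "u < b" and "(d i = d u \<and> ord j s \<notin> A u \<and> ord i s \<in> A u) \<or>
          (d j = d u \<and> ord i s \<notin> A u \<and> ord j s \<in> A u)"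
        by (auto simp: benefits_def transmission_def t(1))
      then show "u \<in> {i,j}" using inj ib t(3) by (auto dest: inj_onD)
    next
      fix u assume "u \<in> {i,j}"
      then show "u \<in> {u. u < b \<and> benefits A d u (transmission d ord t)}"
        using ib t disj ois ojs by (auto simp: benefits_def transmission_def)
    qed
    then show "card {u. u < b \<and> benefits A d u (transmission d ord t)} = 2" using t by simp
  qed
  show ?thesis using R W C3 C4 by blast
qed

end
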